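(* Let $E\subset\mathbb{R}^2$ be a compact, path connected set, let $r>0$, and let $\Gamma^\ast$ be an $r$-maximum distance minimizer of $B(E,r)$. Let $x_0,x_1\in\Gamma^\ast\cap B(E,2r)$. Then there exist $N\ge1$ and points $x_2,\dots,x_N\in\Gamma^\ast\cap B(E,2r)$ such that $|x_j-x_{j+1}|\le4r$ for $j=1,\dots,N$, where $x_{N+1}:=x_0$.
   Context: For $A\subset\mathbb{R}^2$ and $r>0$, $B(A,r):=\{x:\mathrm{dist}(x,A)\le r\}$. A rectifiable curve is the image of a Lipschitz map $[0,1]\to\mathbb{R}^2$. $\Lambda(K,r):=\inf\{\mathcal{H}^1(\Gamma):\Gamma \text{ a rectifiable curve with } B(\Gamma,r)\supset K\}$. An $r$-maximum distance minimizer of $K$ is a rectifiable curve $\Gamma$ with $B(\Gamma,r)\supset K$ and $\mathcal{H}^1(\Gamma)=\Lambda(K,r)$. *)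

theory Defs
  imports "HOL-Analysis.Analysis"
begin

definition cnbhd :: "(real^2) set \<Rightarrow> real \<Rightarrow> (real^2) set" where
  "cnbhd A r = {x. infdist x A \<le> r}"

definition rect_curve :: "(real^2) set \<Rightarrow> bool" where
  "rect_curve G \<longleftrightarrow> (\<exists>(g::real \<Rightarrow> real^2) L. L-lipschitz_on {0..1} g \<and> G = g ` {0..1})"

text \<open>One-dimensional Hausdorff measure (normalised so that it is length):
  H^1_delta(A) = inf of sums of diameters of countable covers by bounded sets of diameter \<le> delta,
  H^1(A) = sup over delta > 0.\<close>
definition hausdorff1_delta :: "real \<Rightarrow> (real^2) set \<Rightarrow> ennreal" where
  "hausdorff1_delta d A = Inf {(\<Sum>i. ennreal (diameter (C i))) | C :: nat \<Rightarrow> (real^2) set.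
       A \<subseteq> (\<Union>i. C i) \<and> (\<forall>i. bounded (C i) \<and> diameter (C i) \<le> d)}"

definition hausdorff1 :: "(real^2) set \<Rightarrow> ennreal" where
  "hausdorff1 A = (SUP d\<in>{0<..}. hausdorff1_delta d A)"

definition Lambda :: "(real^2) set \<Rightarrow> real \<Rightarrow> ennreal" where
  "Lambda K r = Inf {hausdorff1 G | G. rect_curve G \<and> K \<subseteq> cnbhd G r}"

definition max_dist_minimizer :: "(real^2) set \<Rightarrow> real \<Rightarrow> (real^2) set \<Rightarrow> bool" where
  "max_dist_minimizer K r G \<longleftrightarrow> rect_curve G \<and> K \<subseteq> cnbhd G r \<and> hausdorff1 G = Lambda K r"

end

theory Submission
  imports Defs
begin

theorem lemma4p3:
  fixes E \<Gamma> :: "(real^2) set" and r :: real and x0 x1 :: "real^2"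
  assumes "compact E" and "path_connected E" and "r > 0"
    and "max_dist_minimizer (cnbhd E r) r \<Gamma>"
    and "x0 \<in> \<Gamma> \<inter> cnbhd E (2*r)" and "x1 \<in> \<Gamma> \<inter> cnbhd E (2*r)"
  shows "\<exists>N::nat. N \<ge> 1 \<and> (\<exists>x :: nat \<Rightarrow> real^2. x 0 = x0 \<and> x 1 = x1 \<and>
           (\<forall>i\<in>{2..N}. x i \<in> \<Gamma> \<inter> cnbhd E (2*r)) \<and>
           (\<forall>j\<in>{1..N}. dist (x j) (if j = N then x0 else x (j+1)) \<le> 4*r))"
proof -
  from assms(4) have rc: "rect_curve \<Gamma>" and cov: "cnbhd E r \<subseteq> cnbhd \<Gamma> r"
    unfolding max_dist_minimizer_def by auto
  from rc obtain L and g :: "real \<Rightarrow> real^2" where gl: "L-lipschitz_on {0..1} g" and G: "\<Gamma> = g ` {0..1}"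
    unfolding rect_curve_def by blast
  have "continuous_on {0..1} g" using gl by (rule lipschitz_on_continuous_on)
  hence cG: "compact \<Gamma>" using G compact_continuous_image by blast
  have Gne: "\<Gamma> \<noteq> {}" using G by auto
  have Ene: "E \<noteq> {}"
  proof
    assume E0: "E = {}"
    from compact_imp_bounded[OF cG] obtain B where B0: "\<forall>z\<in>\<Gamma>. norm z \<le> B"
      unfolding bounded_iff by blast
    have B: "norm z \<le> B" if "z \<in> \<Gamma>" for z using B0 that by blast
    define y :: "real^2" where "y = (\<bar>B\<bar> + r + 1) *\<^sub>R axis 1 1"
    have ny: "norm y = \<bar>B\<bar> + r + 1" unfolding y_def using \<open>r>0\<close> by simp
    have "y \<in> cnbhd E r" unfolding cnbhd_def E0 infdist_def using \<open>r>0\<close> by simp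
    hence "infdist y \<Gamma> \<le> r" using cov unfolding cnbhd_def by auto
    moreover obtain z where "z \<in> \<Gamma>" "infdist y \<Gamma> = dist y z"
      using infdist_attains_inf[OF compact_imp_closed[OF cG] Gne] by blast
    moreover have "dist y z \<ge> norm y - norm z" by (simp add: dist_norm norm_triangle_ineq2)
    ultimately show False using B[OF \<open>z\<in>\<Gamma>\<close>] ny by linarith
  qed
  have near: "\<exists>z. z \<in> \<Gamma> \<and> dist y z \<le> r" if "y \<in> E" for y
  proof -
    have "y \<in> cnbhd E r" unfolding cnbhd_def using that \<open>r>0\<close> by simp
    hence "infdist y \<Gamma> \<le> r" using cov unfolding cnbhd_def by auto
    moreover obtain z where "z \<in> \<Gamma>" "infdist y \<Gamma> = dist y z"
      using infdist_attains_inf[OF compact_imp_closed[OF cG] Gne] by blast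
    ultimately show ?thesis by auto
  qed
  define c where "c y = (SOME z. z \<in> \<Gamma> \<and> dist y z \<le> r)" for y
  have c: "c y \<in> \<Gamma>" "dist y (c y) \<le> r" if "y \<in> E" for y
    using someI_ex[OF near[OF that]] unfolding c_def by auto
  have cE: "c y \<in> cnbhd E (2*r)" if "y \<in> E" for y
  proof -
    have "infdist (c y) E \<le> dist (c y) y" by (rule infdist_le[OF that])
    thus ?thesis unfolding cnbhd_def using c(2)[OF that] \<open>r>0\<close> by (simp add: dist_commute)
  qed
  have ex_e: "\<exists>e\<in>E. dist x e \<le> 2*r" if "x \<in> cnbhd E (2*r)" for x
  proof -
    obtain e where "e \<in> E" "infdist x E = dist x e"
      using infdist_attains_inf[OF compact_imp_closed[OF assms(1)] Ene] by blast
    thus ?thesis using that unfolding cnbhd_def by auto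
  qed
  obtain e0 where e0: "e0 \<in> E" "dist x0 e0 \<le> 2*r" using ex_e assms(5) by blast
  obtain e1 where e1: "e1 \<in> E" "dist x1 e1 \<le> 2*r" using ex_e assms(6) by blast
  obtain p where p: "path p" "path_image p \<subseteq> E" "pathstart p = e1" "pathfinish p = e0"
    using assms(2) e0(1) e1(1) unfolding path_connected_def by blast
  have "uniformly_continuous_on {0..1} p"
    using p(1) unfolding path_def by (metis compact_Icc compact_uniformly_continuous)
  then obtain d where d: "d > 0" "\<And>s t. s \<in> {0..1} \<Longrightarrow> t \<in> {0..1} \<Longrightarrow> dist t s < d \<Longrightarrow> dist (p t) (p s) < 2*r"
  proof -
    have "2*r > 0" using \<open>r>0\<close> by simp
    thus ?thesis using that \<open>uniformly_continuous_on {0..1} p\<close> unfolding uniformly_continuous_on_def by blast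
  qed
  obtain m :: nat where m0: "m > 0" "inverse (real m) < d"
    using d(1) ex_inverse_of_nat_less by blast
  have m: "m > 0" "1 / real m < d" using m0 by (auto simp: inverse_eq_divide)
  define q where "q k = p (real k / real m)" for k :: nat
  have qE: "q k \<in> E" if "k \<le> m" for k
  proof -
    have "real k / real m \<in> {0..1}" using that m by (auto simp: field_simps)
    thus ?thesis using p(2) unfolding q_def path_image_def by auto
  qed
  have qstep: "dist (q k) (q (k+1)) \<le> 2*r" if "k < m" for k
  proof -
    have a: "real k / real m \<in> {0..1}" "real (k+1) / real m \<in> {0..1}" using that m by (auto simp: field_simps)
    have "dist (real (k+1) / real m) (real k / real m) = 1 / real m"
      using m by (simp add: dist_real_def field_simps)
    thus ?thesis using d(2)[OF a(1) a(2)] m(2) unfolding q_def by (simp add: dist_commute)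
  qed
  have q0: "q 0 = e1" using p(3) unfolding q_def pathstart_def by simp
  have qm: "q m = e0" using p(4) m unfolding q_def pathfinish_def by simp
  define x where "x i = (if i = 0 then x0 else if i = 1 then x1 else c (q (i - 2)))" for i
  show ?thesis
  proof (intro exI conjI)
    show "m + 2 \<ge> 1" by simp
    show "x 0 = x0" "x 1 = x1" unfolding x_def by auto
    show "\<forall>i\<in>{2..m+2}. x i \<in> \<Gamma> \<inter> cnbhd E (2*r)"
    proof
      fix i assume i: "i \<in> {2..m+2}"
      hence "q (i-2) \<in> E" using qE by auto
      thus "x i \<in> \<Gamma> \<inter> cnbhd E (2*r)" using i c cE unfolding x_def by auto
    qed
    show "\<forall>j\<in>{1..m+2}. dist (x j) (if j = m+2 then x0 else x (j+1)) \<le> 4*r"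
    proof
      fix j assume j: "j \<in> {1..m+2}"
      show "dist (x j) (if j = m+2 then x0 else x (j+1)) \<le> 4*r"
      proof (cases "j = 1")
        case True
        have "x (j+1) = c e1" using True q0 unfolding x_def by simp
        moreover have "dist x1 (c e1) \<le> dist x1 e1 + dist e1 (c e1)" by (rule dist_triangle)
        ultimately show ?thesis using True e1 c(2)[OF e1(1)] \<open>r>0\<close> m by (simp add: x_def)
      next
        case False
        show ?thesis
        proof (cases "j = m+2")
          case True
          have xj: "x j = c e0" using True qm unfolding x_def by simp
          have "dist (c e0) x0 \<le> dist (c e0) e0 + dist e0 x0" by (rule dist_triangle)
          thus ?thesis using True xj e0 c(2)[OF e0(1)] \<open>r>0\<close> by (simp add: dist_commute)
        next
          case False2: False
          define k where "k = j - 2"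
          have k: "j = k + 2" "k < m" using j False False2 unfolding k_def by auto
          have xs: "x j = c (q k)" "x (j+1) = c (q (k+1))" using k unfolding x_def by auto
          have E1: "q k \<in> E" "q (k+1) \<in> E" using k qE by auto
          have "dist (c (q k)) (c (q (k+1))) \<le> dist (c (q k)) (q k) + dist (q k) (q (k+1)) + dist (q (k+1)) (c (q (k+1)))"
            using dist_triangle[of "c (q k)" "c (q (k+1))" "q k"] dist_triangle[of "q k" "c (q (k+1))" "q (k+1)"] by linarith
          thus ?thesis using xs False2 qstep[OF k(2)] c(2)[OF E1(1)] c(2)[OF E1(2)] by (simp add: dist_commute)
        qed
      qed
    qed
  qed
qed

end
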